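(* If $G$ is a connected graph and $n\ge 1$, then $\mathrm{gp}(G\boxtimes K_n)=n\cdot \mathrm{gp}(G)$. Moreover, if $\mathrm{gp}(G)=\omega(G_{\rm SR})$, then $\mathrm{gp}(G\boxtimes K_n)=\omega((G\boxtimes K_n)_{\rm SR})$.
   Context: All graphs are finite and simple. The strong product $G\boxtimes H$ has vertex set $V(G)\times V(H)$, with distinct $(g,h),(g',h')$ adjacent iff ($g=g'$ or $gg'\in E(G)$) and ($h=h'$ or $hh'\in E(H)$). For a connected graph $G$, a set $S\subseteq V(G)$ is a general position set if no three pairwise distinct vertices of $S$ lie on a common geodesic (shortest path); $\mathrm{gp}(G)$ is the maximum cardinality of a general position set. A vertex $u$ is maximally distant from $v$ if every neighbor $w$ of $u$ satisfies $d_G(v,w)\le d_G(u,v)$; $u,v$ are mutually maximally distant (MMD) if each is maximally distant from the other. The strong resolving graph $G_{\rm SR}$ has vertex set $V(G)$, distinct vertices adjacent iff MMD in $G$. $\omega$ is the clique number. *)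

theory Defs
  imports Main
begin

type_synonym 'a graph = "'a set \<times> ('a \<times> 'a) set"

definition verts :: "'a graph \<Rightarrow> 'a set" where "verts G = fst G"
definition adj :: "'a graph \<Rightarrow> 'a \<Rightarrow> 'a \<Rightarrow> bool" where "adj G u v \<longleftrightarrow> (u, v) \<in> snd G"

definition simple_graph :: "'a graph \<Rightarrow> bool" where
  "simple_graph G \<longleftrightarrow> finite (verts G) \<and> snd G \<subseteq> verts G \<times> verts G
     \<and> sym (snd G) \<and> irrefl (snd G)"

text \<open>Walks as nonempty vertex lists; length of a walk = number of edges.\<close>
definition walk :: "'a graph \<Rightarrow> 'a list \<Rightarrow> bool" where
  "walk G xs \<longleftrightarrow> xs \<noteq> [] \<and> set xs \<subseteq> verts G \<and> (\<forall>i. Suc i < length xs \<longrightarrow> adj G (xs ! i) (xs ! Suc i))"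

definition walk_betw :: "'a graph \<Rightarrow> 'a \<Rightarrow> 'a list \<Rightarrow> 'a \<Rightarrow> bool" where
  "walk_betw G u xs v \<longleftrightarrow> walk G xs \<and> hd xs = u \<and> last xs = v"

definition connected_graph :: "'a graph \<Rightarrow> bool" where
  "connected_graph G \<longleftrightarrow> verts G \<noteq> {} \<and> (\<forall>u\<in>verts G. \<forall>v\<in>verts G. \<exists>xs. walk_betw G u xs v)"

definition dist :: "'a graph \<Rightarrow> 'a \<Rightarrow> 'a \<Rightarrow> nat" where
  "dist G u v = (LEAST k. \<exists>xs. walk_betw G u xs v \<and> length xs = Suc k)"

definition geodesic :: "'a graph \<Rightarrow> 'a \<Rightarrow> 'a list \<Rightarrow> 'a \<Rightarrow> bool" where
  "geodesic G u xs v \<longleftrightarrow> walk_betw G u xs v \<and> length xs = Suc (dist G u v)"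

definition gp_set :: "'a graph \<Rightarrow> 'a set \<Rightarrow> bool" where
  "gp_set G S \<longleftrightarrow> S \<subseteq> verts G \<and>
     (\<forall>x\<in>S. \<forall>y\<in>S. \<forall>z\<in>S. x \<noteq> y \<and> y \<noteq> z \<and> x \<noteq> z \<longrightarrow>
        \<not> (\<exists>u v xs. geodesic G u xs v \<and> {x, y, z} \<subseteq> set xs))"

definition gp :: "'a graph \<Rightarrow> nat" where
  "gp G = Max {card S | S. gp_set G S}"

definition maximally_distant :: "'a graph \<Rightarrow> 'a \<Rightarrow> 'a \<Rightarrow> bool" where
  "maximally_distant G u v \<longleftrightarrow> (\<forall>w. adj G u w \<longrightarrow> dist G v w \<le> dist G u v)"

definition MMD :: "'a graph \<Rightarrow> 'a \<Rightarrow> 'a \<Rightarrow> bool" where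
  "MMD G u v \<longleftrightarrow> maximally_distant G u v \<and> maximally_distant G v u"

definition strong_resolving_graph :: "'a graph \<Rightarrow> 'a graph" where
  "strong_resolving_graph G =
     (verts G, {(u, v). u \<in> verts G \<and> v \<in> verts G \<and> u \<noteq> v \<and> MMD G u v})"

definition clique :: "'a graph \<Rightarrow> 'a set \<Rightarrow> bool" where
  "clique G K \<longleftrightarrow> K \<subseteq> verts G \<and> (\<forall>u\<in>K. \<forall>v\<in>K. u \<noteq> v \<longrightarrow> adj G u v)"

definition clique_number :: "'a graph \<Rightarrow> nat" where
  "clique_number G = Max {card K | K. clique G K}"

definition complete_graph :: "nat \<Rightarrow> nat graph" where
  "complete_graph n = ({0..<n}, {(i, j). i < n \<and> j < n \<and> i \<noteq> j})"

definition strong_product :: "'a graph \<Rightarrow> 'b graph \<Rightarrow> ('a \<times> 'b) graph" where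
  "strong_product G H = (verts G \<times> verts H,
     {((g, h), (g', h')). (g, h) \<in> verts G \<times> verts H \<and> (g', h') \<in> verts G \<times> verts H
        \<and> (g, h) \<noteq> (g', h') \<and> (g = g' \<or> adj G g g') \<and> (h = h' \<or> adj H h h')})"

end

theory Submission
  imports Defs
begin

lemma walk_succ: "walk G xs \<longleftrightarrow> xs \<noteq> [] \<and> set xs \<subseteq> verts G \<and> successively (adj G) xs"
  unfolding walk_def successively_conv_nth by auto

lemma adj_verts: "simple_graph G \<Longrightarrow> adj G u v \<Longrightarrow> u \<in> verts G \<and> v \<in> verts G"
  by (auto simp: simple_graph_def adj_def verts_def)

lemma adj_sym: "simple_graph G \<Longrightarrow> adj G u v \<Longrightarrow> adj G v u"
  by (auto simp: simple_graph_def adj_def sym_def)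

lemma adj_irrefl: "simple_graph G \<Longrightarrow> \<not> adj G u u"
  by (auto simp: simple_graph_def adj_def irrefl_def)

lemma walk_betw_single: "u \<in> verts G \<Longrightarrow> walk_betw G u [u] u"
  by (simp add: walk_betw_def walk_succ)

lemma walk_betw_edge: "simple_graph G \<Longrightarrow> adj G u v \<Longrightarrow> walk_betw G u [u,v] v"
  using adj_verts[of G u v] by (simp add: walk_betw_def walk_succ)

lemma walk_betw_append:
  assumes "walk_betw G a p b" "walk_betw G b q c"
  shows "walk_betw G a (p @ tl q) c" "length (p @ tl q) = length p + length q - 1"
proof -
  have q: "q = b # tl q" using assms(2) unfolding walk_betw_def walk_succ
    by (metis list.collapse)
  have "successively (adj G) (p @ tl q)"
  proof -
    have s: "successively (adj G) (b # tl q)" "successively (adj G) p" "last p = b" "p \<noteq> []"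
      using assms q unfolding walk_betw_def walk_succ by auto
    then show ?thesis unfolding successively_append_iff successively_Cons by auto
  qed
  moreover have "set (p @ tl q) \<subseteq> verts G" using assms q unfolding walk_betw_def walk_succ
    by (metis Un_subset_iff set_append set_subset_Cons subset_trans)
  moreover have "last (p @ tl q) = c" using assms q unfolding walk_betw_def walk_succ
    by (metis append.right_neutral last.simps last_appendR)
  ultimately show "walk_betw G a (p @ tl q) c" using assms unfolding walk_betw_def walk_succ
    by simp
  show "length (p @ tl q) = length p + length q - 1" using q by (cases q) auto
qed

lemma walk_betw_rev: "simple_graph G \<Longrightarrow> walk_betw G a p b \<Longrightarrow> walk_betw G b (rev p) a"
proof -
  assume a: "simple_graph G" "walk_betw G a p b"
  then have "successively (\<lambda>x y. adj G y x) p"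
    unfolding walk_betw_def walk_succ by (auto elim: successively_mono intro: adj_sym)
  with a show ?thesis unfolding walk_betw_def walk_succ by (simp add: hd_rev last_rev)
qed

lemma dist_le: "walk_betw G u xs v \<Longrightarrow> dist G u v \<le> length xs - 1"
proof -
  assume a: "walk_betw G u xs v"
  then have "xs \<noteq> []" by (simp add: walk_betw_def walk_def)
  then have "length xs = Suc (length xs - 1)" by (cases xs) auto
  with a show ?thesis unfolding dist_def by (intro Least_le) blast
qed

lemma dist_ex: "connected_graph G \<Longrightarrow> u \<in> verts G \<Longrightarrow> v \<in> verts G \<Longrightarrow>
   \<exists>xs. walk_betw G u xs v \<and> length xs = Suc (dist G u v)"
proof -
  assume "connected_graph G" "u \<in> verts G" "v \<in> verts G"
  then obtain xs where xs: "walk_betw G u xs v" unfolding connected_graph_def by blast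
  hence "\<exists>k xs. walk_betw G u xs v \<and> length xs = Suc k"
  proof -
    have "xs \<noteq> []" using xs by (simp add: walk_betw_def walk_def)
    then have "length xs = Suc (length xs - 1)" by (cases xs) auto
    with xs show ?thesis by blast
  qed
  then show ?thesis unfolding dist_def by (rule LeastI_ex)
qed

lemma dist_self: "u \<in> verts G \<Longrightarrow> dist G u u = 0"
  using dist_le[OF walk_betw_single[of u G]] by simp

lemma dist_0: "connected_graph G \<Longrightarrow> u \<in> verts G \<Longrightarrow> v \<in> verts G \<Longrightarrow> dist G u v = 0 \<Longrightarrow> u = v"
proof -
  assume a: "connected_graph G" "u \<in> verts G" "v \<in> verts G" "dist G u v = 0"
  then obtain xs where "walk_betw G u xs v" "length xs = 1" using dist_ex[of G u v] by auto
  then show ?thesis unfolding walk_betw_def by (cases xs) auto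
qed

lemma dist_sym: "simple_graph G \<Longrightarrow> connected_graph G \<Longrightarrow> u \<in> verts G \<Longrightarrow> v \<in> verts G \<Longrightarrow> dist G u v = dist G v u"
proof -
  assume a: "simple_graph G" "connected_graph G" "u \<in> verts G" "v \<in> verts G"
  obtain p where p: "walk_betw G u p v" "length p = Suc (dist G u v)" using dist_ex[of G u v] a by blast
  obtain q where q: "walk_betw G v q u" "length q = Suc (dist G v u)" using dist_ex[of G v u] a by blast
  have 1: "dist G v u \<le> dist G u v" using dist_le[OF walk_betw_rev[OF a(1) p(1)]] p(2) by simp
  have 2: "dist G u v \<le> dist G v u" using dist_le[OF walk_betw_rev[OF a(1) q(1)]] q(2) by simp
  from 1 2 show ?thesis by simp
qed

lemma dist_triangle: "connected_graph G \<Longrightarrow> u \<in> verts G \<Longrightarrow> v \<in> verts G \<Longrightarrow> w \<in> verts G \<Longrightarrow>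
   dist G u w \<le> dist G u v + dist G v w"
proof -
  assume a: "connected_graph G" "u \<in> verts G" "v \<in> verts G" "w \<in> verts G"
  obtain p where p: "walk_betw G u p v" "length p = Suc (dist G u v)" using dist_ex[of G u v] a by blast
  obtain q where q: "walk_betw G v q w" "length q = Suc (dist G v w)" using dist_ex[of G v w] a by blast
  show ?thesis using dist_le[OF walk_betw_append(1)[OF p(1) q(1)]] walk_betw_append(2)[OF p(1) q(1)] p q
    by simp
qed

lemma dist_adj: "simple_graph G \<Longrightarrow> adj G u v \<Longrightarrow> dist G u v \<le> 1"
  using dist_le[OF walk_betw_edge] by fastforce

lemma walk_sub:
  assumes "walk G xs" "i \<le> j" "j < length xs"
  shows "walk_betw G (xs!i) (drop i (take (Suc j) xs)) (xs!j)"
    "length (drop i (take (Suc j) xs)) = Suc j - i"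
proof -
  let ?ys = "drop i (take (Suc j) xs)"
  have len: "length ?ys = Suc j - i" using assms by simp
  have nth: "\<And>k. k < length ?ys \<Longrightarrow> ?ys ! k = xs ! (i + k)" using assms by simp
  have ne: "?ys \<noteq> []" using len assms by auto
  have "set ?ys \<subseteq> set xs" by (meson set_drop_subset set_take_subset subset_trans)
  then have s: "set ?ys \<subseteq> verts G" using assms(1) unfolding walk_def by blast
  have a: "\<forall>k. Suc k < length ?ys \<longrightarrow> adj G (?ys ! k) (?ys ! Suc k)"
  proof (intro allI impI)
    fix k assume k: "Suc k < length ?ys"
    then have "Suc (i + k) < length xs" using len assms by simp
    then have "adj G (xs ! (i+k)) (xs ! Suc (i+k))" using assms(1) unfolding walk_def by blast
    then show "adj G (?ys ! k) (?ys ! Suc k)" using nth k by simp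
  qed
  have h: "hd ?ys = xs ! i"
  proof -
    have "0 < length ?ys" using ne length_greater_0_conv by blast
    then have "?ys ! 0 = xs ! (i + 0)" by (rule nth)
    then show ?thesis using ne by (simp add: hd_conv_nth min_def split: if_splits)
  qed
  have l: "last ?ys = xs ! j"
  proof -
    have "length ?ys - 1 < length ?ys" using ne by simp
    then have "?ys ! (length ?ys - 1) = xs ! (i + (length ?ys - 1))" by (rule nth)
    moreover have "i + (length ?ys - 1) = j" using len assms by simp
    ultimately show ?thesis using ne by (simp add: last_conv_nth)
  qed
  show "walk_betw G (xs!i) ?ys (xs!j)" unfolding walk_betw_def walk_def using ne s a h l by blast
  show "length ?ys = Suc j - i" by (rule len)
qed

lemma geodesic_dist:
  assumes G: "simple_graph G" "connected_graph G" and g: "geodesic G u xs v"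
    and ij: "i \<le> j" "j < length xs"
  shows "dist G (xs!i) (xs!j) = j - i"
proof -
  have w: "walk G xs" and hu: "hd xs = u" and lv: "last xs = v" and len: "length xs = Suc (dist G u v)"
    using g unfolding geodesic_def walk_betw_def by auto
  have ne: "xs \<noteq> []" using w unfolding walk_def by auto
  have u: "u = xs ! 0" using hu ne by (simp add: hd_conv_nth)
  have v: "v = xs ! (length xs - 1)" using lv ne by (simp add: last_conv_nth)
  have sv: "set xs \<subseteq> verts G" using w unfolding walk_def by auto
  have inV: "\<And>k. k < length xs \<Longrightarrow> xs ! k \<in> verts G" using sv by auto
  have le1: "dist G (xs!i) (xs!j) \<le> j - i"
    using dist_le[OF walk_sub(1)[OF w ij]] walk_sub(2)[OF w ij] by simp
  have iV: "xs!i \<in> verts G" and jV: "xs!j \<in> verts G" using inV ij by auto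
  have uV: "u \<in> verts G" using inV[of 0] ne u by auto
  have vV: "v \<in> verts G" using inV[of "length xs - 1"] ne v by auto
  have le2: "dist G u (xs!i) \<le> i"
  proof -
    have "dist G (xs!0) (xs!i) \<le> length (drop 0 (take (Suc i) xs)) - 1"
      by (rule dist_le[OF walk_sub(1)[OF w, of 0 i]]) (use ij in auto)
    then show ?thesis using walk_sub(2)[OF w, of 0 i] ij u by simp
  qed
  have le3: "dist G (xs!j) v \<le> length xs - 1 - j"
  proof -
    have "dist G (xs!j) (xs!(length xs - 1)) \<le> length (drop j (take (Suc (length xs - 1)) xs)) - 1"
      by (rule dist_le[OF walk_sub(1)[OF w, of j "length xs - 1"]]) (use ij in auto)
    then show ?thesis using walk_sub(2)[OF w, of j "length xs - 1"] ij v by simp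
  qed
  have t1: "dist G u v \<le> dist G u (xs!i) + dist G (xs!i) v"
    by (rule dist_triangle[OF G(2) uV iV vV])
  have t2: "dist G (xs!i) v \<le> dist G (xs!i) (xs!j) + dist G (xs!j) v"
    by (rule dist_triangle[OF G(2) iV jV vV])
  from le1 le2 le3 t1 t2 len ij show ?thesis by linarith
qed

lemma geodesic_dist_abs:
  assumes G: "simple_graph G" "connected_graph G" and g: "geodesic G u xs v"
    and ij: "i < length xs" "j < length xs"
  shows "dist G (xs!i) (xs!j) = (if i \<le> j then j - i else i - j)"
proof (cases "i \<le> j")
  case True then show ?thesis using geodesic_dist[OF G g True ij(2)] by simp
next
  case False
  then have ji: "j \<le> i" by simp
  have w: "set xs \<subseteq> verts G" using g unfolding geodesic_def walk_betw_def walk_def by auto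
  have iV: "xs!i \<in> verts G" using w ij(1) nth_mem by blast
  have jV: "xs!j \<in> verts G" using w ij(2) nth_mem by blast
  have 1: "dist G (xs!j) (xs!i) = i - j" by (rule geodesic_dist[OF G g ji ij(1)])
  have 2: "dist G (xs!i) (xs!j) = dist G (xs!j) (xs!i)" by (rule dist_sym[OF G iV jV])
  show ?thesis using 1 2 False by simp
qed

definition betw :: "'a graph \<Rightarrow> 'a \<Rightarrow> 'a \<Rightarrow> 'a \<Rightarrow> bool" where
  "betw G a b c \<longleftrightarrow> dist G a c = dist G a b + dist G b c"

lemma betw_geodesic:
  assumes G: "simple_graph G" "connected_graph G" and V: "a \<in> verts G" "b \<in> verts G" "c \<in> verts G"
    and bt: "betw G a b c"
  shows "\<exists>xs. geodesic G a xs c \<and> {a,b,c} \<subseteq> set xs"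
proof -
  obtain p where p: "walk_betw G a p b" "length p = Suc (dist G a b)" using dist_ex[of G a b] G V by blast
  obtain q where q: "walk_betw G b q c" "length q = Suc (dist G b c)" using dist_ex[of G b c] G V by blast
  have w: "walk_betw G a (p @ tl q) c" by (rule walk_betw_append(1)[OF p(1) q(1)])
  have l: "length (p @ tl q) = Suc (dist G a c)"
    using walk_betw_append(2)[OF p(1) q(1)] p(2) q(2) bt unfolding betw_def by simp
  have pne: "p \<noteq> []" using p unfolding walk_betw_def walk_def by auto
  have "a \<in> set p" using p pne unfolding walk_betw_def by auto
  moreover have "b \<in> set p" using p pne unfolding walk_betw_def by auto
  moreover have "c \<in> set (p @ tl q)" using w unfolding walk_betw_def walk_def by (metis last_in_set)
  ultimately show ?thesis using w l unfolding geodesic_def by auto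
qed

lemma on_geod_iff:
  assumes G: "simple_graph G" "connected_graph G" and V: "x \<in> verts G" "y \<in> verts G" "z \<in> verts G"
    and d: "x \<noteq> y" "y \<noteq> z" "x \<noteq> z"
  shows "(\<exists>u v xs. geodesic G u xs v \<and> {x,y,z} \<subseteq> set xs) \<longleftrightarrow>
     (betw G x y z \<or> betw G y x z \<or> betw G x z y)"
proof
  assume "\<exists>u v xs. geodesic G u xs v \<and> {x,y,z} \<subseteq> set xs"
  then obtain u v xs where g: "geodesic G u xs v" and s: "{x,y,z} \<subseteq> set xs" by blast
  obtain p where p: "p < length xs" "xs ! p = x" using s by (auto simp: in_set_conv_nth)
  obtain q where q: "q < length xs" "xs ! q = y" using s by (auto simp: in_set_conv_nth)
  obtain r where r: "r < length xs" "xs ! r = z" using s by (auto simp: in_set_conv_nth)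
  have D: "\<And>i j. i < length xs \<Longrightarrow> j < length xs \<Longrightarrow> dist G (xs!i) (xs!j) = (if i \<le> j then j - i else i - j)"
    using geodesic_dist_abs[OF G g] by blast
  have "dist G x y = (if p \<le> q then q - p else p - q)" using D[OF p(1) q(1)] p q by simp
  moreover have "dist G y x = (if q \<le> p then p - q else q - p)" using D[OF q(1) p(1)] p q by simp
  moreover have "dist G x z = (if p \<le> r then r - p else p - r)" using D[OF p(1) r(1)] p r by simp
  moreover have "dist G z x = (if r \<le> p then p - r else r - p)" using D[OF r(1) p(1)] p r by simp
  moreover have "dist G y z = (if q \<le> r then r - q else q - r)" using D[OF q(1) r(1)] q r by simp
  moreover have "dist G z y = (if r \<le> q then q - r else r - q)" using D[OF r(1) q(1)] q r by simp
  ultimately show "betw G x y z \<or> betw G y x z \<or> betw G x z y"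
    unfolding betw_def by (auto split: if_splits)
next
  assume "betw G x y z \<or> betw G y x z \<or> betw G x z y"
  then show "\<exists>u v xs. geodesic G u xs v \<and> {x,y,z} \<subseteq> set xs"
  proof (elim disjE)
    assume "betw G x y z" then show ?thesis using betw_geodesic[OF G V(1) V(2) V(3)] by blast
  next
    assume "betw G y x z" then show ?thesis using betw_geodesic[OF G V(2) V(1) V(3)] by blast
  next
    assume "betw G x z y" then show ?thesis using betw_geodesic[OF G V(1) V(3) V(2)] by blast
  qed
qed

lemma gp_set_iff:
  assumes G: "simple_graph G" "connected_graph G"
  shows "gp_set G S \<longleftrightarrow> S \<subseteq> verts G \<and>
    (\<forall>x\<in>S. \<forall>y\<in>S. \<forall>z\<in>S. x \<noteq> y \<and> y \<noteq> z \<and> x \<noteq> z \<longrightarrow> \<not> betw G x y z)"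
proof
  assume a: "gp_set G S"
  then have S: "S \<subseteq> verts G" unfolding gp_set_def by blast
  show "S \<subseteq> verts G \<and> (\<forall>x\<in>S. \<forall>y\<in>S. \<forall>z\<in>S. x \<noteq> y \<and> y \<noteq> z \<and> x \<noteq> z \<longrightarrow> \<not> betw G x y z)"
  proof (intro conjI S ballI impI)
    fix x y z assume m: "x \<in> S" "y \<in> S" "z \<in> S" and d: "x \<noteq> y \<and> y \<noteq> z \<and> x \<noteq> z"
    have xV: "x \<in> verts G" "y \<in> verts G" "z \<in> verts G" using m S by auto
    note e = on_geod_iff[OF G xV conjunct1[OF d] conjunct1[OF conjunct2[OF d]] conjunct2[OF conjunct2[OF d]]]
    have ng: "\<not> (\<exists>u v xs. geodesic G u xs v \<and> {x,y,z} \<subseteq> set xs)"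
      using a m d unfolding gp_set_def by blast
    show "\<not> betw G x y z"
    proof
      assume "betw G x y z"
      then have "\<exists>u v xs. geodesic G u xs v \<and> {x,y,z} \<subseteq> set xs"
        using e by (simp only: simp_thms)
      then show False using ng by (rule notE[rotated])
    qed
  qed
next
  assume a: "S \<subseteq> verts G \<and> (\<forall>x\<in>S. \<forall>y\<in>S. \<forall>z\<in>S. x \<noteq> y \<and> y \<noteq> z \<and> x \<noteq> z \<longrightarrow> \<not> betw G x y z)"
  show "gp_set G S" unfolding gp_set_def
  proof (intro conjI ballI impI)
    show "S \<subseteq> verts G" using a by blast
    fix x y z assume m: "x \<in> S" "y \<in> S" "z \<in> S" and d: "x \<noteq> y \<and> y \<noteq> z \<and> x \<noteq> z"
    have xV: "x \<in> verts G" "y \<in> verts G" "z \<in> verts G" using m a by auto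
    note e = on_geod_iff[OF G xV conjunct1[OF d] conjunct1[OF conjunct2[OF d]] conjunct2[OF conjunct2[OF d]]]
    have A: "\<And>x y z. x \<in> S \<Longrightarrow> y \<in> S \<Longrightarrow> z \<in> S \<Longrightarrow> x \<noteq> y \<Longrightarrow> y \<noteq> z \<Longrightarrow> x \<noteq> z \<Longrightarrow> \<not> betw G x y z"
      using a by blast
    have n1: "\<not> betw G x y z" by (rule A) (use m d in auto)
    have n2: "\<not> betw G y x z" by (rule A) (use m d in auto)
    have n3: "\<not> betw G x z y" by (rule A) (use m d in auto)
    show "\<not> (\<exists>u v xs. geodesic G u xs v \<and> {x, y, z} \<subseteq> set xs)"
      using e n1 n2 n3 by (simp only: simp_thms)
  qed
qed

lemma sp_verts: "verts (strong_product G (complete_graph n)) = verts G \<times> {0..<n}"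
  by (simp add: strong_product_def verts_def complete_graph_def)

lemma sp_adj: "adj (strong_product G (complete_graph n)) (x,i) (y,j) \<longleftrightarrow>
   x \<in> verts G \<and> y \<in> verts G \<and> i < n \<and> j < n \<and> (x,i) \<noteq> (y,j) \<and> (x = y \<or> adj G x y)"
  by (auto simp: strong_product_def verts_def complete_graph_def adj_def)

lemma sp_simple: assumes "simple_graph G" shows "simple_graph (strong_product G (complete_graph n))"
proof -
  have f: "finite (verts G)" using assms by (simp add: simple_graph_def)
  have s: "sym (snd G)" using assms by (simp add: simple_graph_def)
  show ?thesis using f s unfolding simple_graph_def
    by (auto simp: strong_product_def verts_def complete_graph_def adj_def sym_def irrefl_def)
qed

lemma lift_walk:
  assumes G: "simple_graph G" and w: "walk_betw G a xs b" and j: "j < n"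
  shows "walk_betw (strong_product G (complete_graph n)) (a,j) (map (\<lambda>g. (g,j)) xs) (b,j)"
proof -
  have ne: "xs \<noteq> []" and s: "set xs \<subseteq> verts G" and sc: "successively (adj G) xs"
    and h: "hd xs = a" and l: "last xs = b"
    using w unfolding walk_betw_def walk_succ by auto
  have "successively (\<lambda>x y. adj (strong_product G (complete_graph n)) (x,j) (y,j)) xs"
  proof (rule successively_mono[OF sc])
    fix x y assume "x \<in> set xs" "y \<in> set xs" "adj G x y"
    then show "adj (strong_product G (complete_graph n)) (x,j) (y,j)"
      using adj_verts[OF G] adj_irrefl[OF G, of x] j unfolding sp_adj by auto
  qed
  then have "successively (adj (strong_product G (complete_graph n))) (map (\<lambda>g. (g,j)) xs)"
    by (simp add: successively_map)
  moreover have "set (map (\<lambda>g. (g,j)) xs) \<subseteq> verts (strong_product G (complete_graph n))"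
    using s j unfolding sp_verts by auto
  moreover have "hd (map (\<lambda>g. (g,j)) xs) = (a,j)" using ne h by (simp add: hd_map)
  moreover have "last (map (\<lambda>g. (g,j)) xs) = (b,j)" using ne l by (simp add: last_map)
  ultimately show ?thesis using ne unfolding walk_betw_def walk_succ by simp
qed

lemma sp_connected:
  assumes G: "simple_graph G" "connected_graph G" and n: "n \<ge> 1"
  shows "connected_graph (strong_product G (complete_graph n))"
  unfolding connected_graph_def
proof (intro conjI ballI)
  show "verts (strong_product G (complete_graph n)) \<noteq> {}"
    using G(2) n unfolding sp_verts connected_graph_def by auto
next
  fix p q assume p: "p \<in> verts (strong_product G (complete_graph n))"
    and q: "q \<in> verts (strong_product G (complete_graph n))"
  obtain x i where pi: "p = (x,i)" "x \<in> verts G" "i < n" using p unfolding sp_verts by auto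
  obtain y j where qj: "q = (y,j)" "y \<in> verts G" "j < n" using q unfolding sp_verts by auto
  obtain xs where xs: "walk_betw G x xs y" using G(2) pi qj unfolding connected_graph_def by blast
  have w1: "walk_betw (strong_product G (complete_graph n)) (x,i) (map (\<lambda>g. (g,i)) xs) (y,i)"
    by (rule lift_walk[OF G(1) xs pi(3)])
  show "\<exists>xs. walk_betw (strong_product G (complete_graph n)) p xs q"
  proof (cases "i = j")
    case True then show ?thesis using w1 pi qj by blast
  next
    case False
    have "adj (strong_product G (complete_graph n)) (y,i) (y,j)" using False pi qj unfolding sp_adj by auto
    then have "walk_betw (strong_product G (complete_graph n)) (y,i) [(y,i),(y,j)] (y,j)"
      by (rule walk_betw_edge[OF sp_simple[OF G(1)]])
    then show ?thesis using walk_betw_append(1)[OF w1] pi qj by blast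
  qed
qed

lemma lazy_dist:
  assumes G: "simple_graph G" "connected_graph G"
  shows "ys \<noteq> [] \<Longrightarrow> set ys \<subseteq> verts G \<Longrightarrow> successively (\<lambda>a b. a = b \<or> adj G a b) ys \<Longrightarrow>
     dist G (hd ys) (last ys) \<le> length ys - 1"
proof (induction ys)
  case Nil then show ?case by simp
next
  case (Cons y ys)
  show ?case
  proof (cases "ys = []")
    case True then show ?thesis using Cons.prems dist_self[of y G] by simp
  next
    case False
    have s: "successively (\<lambda>a b. a = b \<or> adj G a b) ys" "y = hd ys \<or> adj G y (hd ys)"
      using Cons.prems(3) False unfolding successively_Cons by auto
    have V: "y \<in> verts G" "hd ys \<in> verts G" "last ys \<in> verts G" using Cons.prems(2) False by auto
    have ih: "dist G (hd ys) (last ys) \<le> length ys - 1" using Cons.IH[OF False _ s(1)] Cons.prems(2) by simp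
    have d1: "dist G y (hd ys) \<le> 1" using s(2) dist_self[OF V(1)] dist_adj[OF G(1)] by auto
    have t: "dist G y (last ys) \<le> dist G y (hd ys) + dist G (hd ys) (last ys)"
      by (rule dist_triangle[OF G(2) V])
    have "length ys \<ge> 1" using False by (cases ys) auto
    then show ?thesis using ih d1 t False by simp
  qed
qed

lemma sp_dist:
  assumes G: "simple_graph G" "connected_graph G" and n: "n \<ge> 1"
    and V: "x \<in> verts G" "y \<in> verts G" "i < n" "j < n"
  shows "dist (strong_product G (complete_graph n)) (x,i) (y,j) =
     (if x = y then (if i = j then 0 else 1) else dist G x y)"
proof -
  let ?P = "strong_product G (complete_graph n)"
  have PS: "simple_graph ?P" by (rule sp_simple[OF G(1)])
  have PC: "connected_graph ?P" by (rule sp_connected[OF G n])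
  have PV: "(x,i) \<in> verts ?P" "(y,j) \<in> verts ?P" using V unfolding sp_verts by auto
  show ?thesis
  proof (cases "x = y")
    case True
    show ?thesis
    proof (cases "i = j")
      case True then show ?thesis using `x = y` dist_self[OF PV(1)] by simp
    next
      case False
      have "adj ?P (x,i) (y,j)" using False True V unfolding sp_adj by auto
      then have "dist ?P (x,i) (y,j) \<le> 1" by (rule dist_adj[OF PS])
      moreover have "dist ?P (x,i) (y,j) \<noteq> 0" using dist_0[OF PC PV] False by auto
      ultimately show ?thesis using True False by simp
    qed
  next
    case False
    obtain zs where zs: "walk_betw ?P (x,i) zs (y,j)" "length zs = Suc (dist ?P (x,i) (y,j))"
      using dist_ex[OF PC PV] by blast
    have "dist G (hd (map fst zs)) (last (map fst zs)) \<le> length (map fst zs) - 1"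
    proof (rule lazy_dist[OF G])
      show "map fst zs \<noteq> []" using zs unfolding walk_betw_def walk_def by simp
      show "set (map fst zs) \<subseteq> verts G" using zs unfolding walk_betw_def walk_def sp_verts by auto
      have "successively (adj ?P) zs" using zs unfolding walk_betw_def walk_succ by simp
      then have "successively (\<lambda>a b. fst a = fst b \<or> adj G (fst a) (fst b)) zs"
      proof (rule successively_mono)
        fix a b assume "adj ?P a b"
        then show "fst a = fst b \<or> adj G (fst a) (fst b)"
          by (cases a, cases b) (simp add: sp_adj)
      qed
      then show "successively (\<lambda>a b. a = b \<or> adj G a b) (map fst zs)"
        by (simp add: successively_map)
    qed
    moreover have "hd (map fst zs) = x" "last (map fst zs) = y"
      using zs unfolding walk_betw_def walk_def by (auto simp: hd_map last_map)
    ultimately have ge: "dist G x y \<le> dist ?P (x,i) (y,j)" using zs(2) by simp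
    obtain xs where xs: "walk_betw G x xs y" "length xs = Suc (dist G x y)"
      using dist_ex[OF G(2) V(1) V(2)] by blast
    have d0: "dist G x y \<noteq> 0" using dist_0[OF G(2) V(1) V(2)] False by auto
    obtain x' ys where xs2: "xs = x' # ys" using xs(2) by (cases xs) auto
    have x': "x' = x" using xs xs2 unfolding walk_betw_def by simp
    have ysne: "ys \<noteq> []" using xs(2) xs2 d0 by auto
    have sc: "successively (adj G) (x' # ys)" using xs xs2 unfolding walk_betw_def walk_succ by auto
    then have scy: "successively (adj G) ys" unfolding successively_Cons using ysne by blast
    have wys: "walk_betw G (hd ys) ys y"
      using xs xs2 ysne scy unfolding walk_betw_def walk_succ by auto
    have axy: "adj G x (hd ys)"
      using sc x' ysne unfolding successively_Cons by blast
    have e: "walk_betw ?P (x,i) [(x,i),(hd ys,j)] (hd ys,j)"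
      by (rule walk_betw_edge[OF PS]) (use axy adj_verts[OF G(1) axy] adj_irrefl[OF G(1), of x] V in \<open>auto simp: sp_adj\<close>)
    have w2: "walk_betw ?P (hd ys, j) (map (\<lambda>g. (g,j)) ys) (y,j)" by (rule lift_walk[OF G(1) wys V(4)])
    have "dist ?P (x,i) (y,j) \<le> length ([(x,i),(hd ys,j)] @ tl (map (\<lambda>g. (g,j)) ys)) - 1"
      by (rule dist_le[OF walk_betw_append(1)[OF e w2]])
    also have "\<dots> = length xs - 1" using walk_betw_append(2)[OF e w2] xs2 by simp
    finally have le: "dist ?P (x,i) (y,j) \<le> dist G x y" using xs(2) by simp
    show ?thesis using le ge False by simp
  qed
qed

lemma gp_fin: "simple_graph G \<Longrightarrow> finite {card S | S. gp_set G S}"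
proof -
  assume G: "simple_graph G"
  have "{card S | S. gp_set G S} \<subseteq> card ` Pow (verts G)" unfolding gp_set_def by auto
  moreover have "finite (card ` Pow (verts G))" using G by (simp add: simple_graph_def)
  ultimately show ?thesis by (rule finite_subset)
qed

lemma gp_set_empty: "gp_set G {}" unfolding gp_set_def by simp

lemma gp_le: "simple_graph G \<Longrightarrow> gp_set G S \<Longrightarrow> card S \<le> gp G"
  unfolding gp_def by (rule Max_ge) (auto simp: gp_fin)

lemma gp_ex: "simple_graph G \<Longrightarrow> \<exists>S. gp_set G S \<and> card S = gp G"
proof -
  assume G: "simple_graph G"
  have ne: "{card S | S. gp_set G S} \<noteq> {}" using gp_set_empty[of G] by auto
  have "gp G \<in> {card S | S. gp_set G S}" unfolding gp_def
    by (rule Max_in[OF gp_fin[OF G] ne])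
  then obtain S where "gp G = card S" "gp_set G S" by auto
  then show ?thesis by auto
qed

lemma cl_fin: "finite (verts H) \<Longrightarrow> finite {card K | K. clique H K}"
proof -
  assume G: "finite (verts H)"
  have "{card K | K. clique H K} \<subseteq> card ` Pow (verts H)" unfolding clique_def by auto
  moreover have "finite (card ` Pow (verts H))" using G by simp
  ultimately show ?thesis by (rule finite_subset)
qed

lemma cl_le: "finite (verts H) \<Longrightarrow> clique H K \<Longrightarrow> card K \<le> clique_number H"
  unfolding clique_number_def by (rule Max_ge) (auto simp: cl_fin)

lemma cl_ex: "finite (verts H) \<Longrightarrow> \<exists>K. clique H K \<and> card K = clique_number H"
proof -
  assume G: "finite (verts H)"
  have "clique H {}" unfolding clique_def by simp
  then have ne: "{card K | K. clique H K} \<noteq> {}" by auto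
  have "clique_number H \<in> {card K | K. clique H K}" unfolding clique_number_def
    by (rule Max_in[OF cl_fin[OF G] ne])
  then obtain K where "clique_number H = card K" "clique H K" by auto
  then show ?thesis by auto
qed

lemma card_fiber:
  assumes S: "S \<subseteq> T \<times> {0..<(n::nat)}" and T: "finite T"
  shows "card S \<le> n * card T"
proof -
  have "card S \<le> card (T \<times> {0..<n})" using S T by (intro card_mono) auto
  also have "\<dots> = n * card T" by (simp add: card_cartesian_product)
  finally show ?thesis .
qed

lemma prod_betw:
  assumes G: "simple_graph G" "connected_graph G" and n: "n \<ge> 1"
    and V: "x \<in> verts G" "y \<in> verts G" "z \<in> verts G" "i < n" "j < n" "k < n"
    and d: "(x,i) \<noteq> (y,j)" "(y,j) \<noteq> (z,k)" "(x,i) \<noteq> (z,k)"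
    and b: "betw (strong_product G (complete_graph n)) (x,i) (y,j) (z,k)"
  shows "x \<noteq> y \<and> y \<noteq> z \<and> x \<noteq> z \<and> betw G x y z"
proof -
  have E: "(if x = z then (if i = k then 0 else 1) else dist G x z) =
     (if x = y then (if i = j then 0 else 1) else dist G x y) + (if y = z then (if j = k then 0 else 1) else dist G y z)"
    using b unfolding betw_def sp_dist[OF G n V(1) V(3) V(4) V(6)] sp_dist[OF G n V(1) V(2) V(4) V(5)]
      sp_dist[OF G n V(2) V(3) V(5) V(6)] .
  have p1: "x \<noteq> y \<Longrightarrow> dist G x y \<noteq> 0" using dist_0[OF G(2) V(1) V(2)] by blast
  have p2: "y \<noteq> z \<Longrightarrow> dist G y z \<noteq> 0" using dist_0[OF G(2) V(2) V(3)] by blast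
  have p3: "x \<noteq> z \<Longrightarrow> dist G x z \<noteq> 0" using dist_0[OF G(2) V(1) V(3)] by blast
  have sy: "dist G y x = dist G x y" by (rule dist_sym[OF G V(2) V(1)])
  have "x \<noteq> y \<and> y \<noteq> z \<and> x \<noteq> z"
  proof (intro conjI notI)
    assume xy: "x = y"
    then have ij: "i \<noteq> j" using d(1) by simp
    show False
    proof (cases "x = z")
      case True
      then have "i \<noteq> k" "j \<noteq> k" using d xy by auto
      then show False using E xy True ij by simp
    next
      case False
      then show False using E xy ij by simp
    qed
  next
    assume yz: "y = z"
    then have jk: "j \<noteq> k" using d(2) by simp
    show False
    proof (cases "x = y")
      case True
      then have "i \<noteq> k" "i \<noteq> j" using d yz by auto
      then show False using E yz True jk by simp
    next
      case False
      then show False using E yz jk by simp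
    qed
  next
    assume xz: "x = z"
    then have ik: "i \<noteq> k" using d(3) by simp
    show False
    proof (cases "x = y")
      case True
      then have "j \<noteq> k" "i \<noteq> j" using d xz by auto
      then show False using E xz True ik by simp
    next
      case False
      then have "y \<noteq> z" using xz by simp
      then show False using E xz ik False p1 sy by simp
    qed
  qed
  then show ?thesis using E unfolding betw_def by simp
qed

theorem gp_prod:
  assumes G: "simple_graph G" "connected_graph G" and n: "n \<ge> 1"
  shows "gp (strong_product G (complete_graph n)) = n * gp G"
proof -
  let ?P = "strong_product G (complete_graph n)"
  have PS: "simple_graph ?P" by (rule sp_simple[OF G(1)])
  have PC: "connected_graph ?P" by (rule sp_connected[OF G n])
  have fin: "finite (verts G)" using G(1) by (simp add: simple_graph_def)
  have le: "gp ?P \<le> n * gp G"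
  proof -
    obtain S where S: "gp_set ?P S" "card S = gp ?P" using gp_ex[OF PS] by blast
    have SV: "S \<subseteq> verts G \<times> {0..<n}" using S(1) unfolding gp_set_def sp_verts by blast
    have SP: "\<And>a b c. a \<in> S \<Longrightarrow> b \<in> S \<Longrightarrow> c \<in> S \<Longrightarrow> a \<noteq> b \<Longrightarrow> b \<noteq> c \<Longrightarrow> a \<noteq> c \<Longrightarrow> \<not> betw ?P a b c"
      using S(1) unfolding gp_set_iff[OF PS PC] by blast
    let ?T = "fst ` S"
    have TV: "?T \<subseteq> verts G" using SV by auto
    have "gp_set G ?T" unfolding gp_set_iff[OF G]
    proof (intro conjI TV ballI impI)
      fix x y z assume m: "x \<in> ?T" "y \<in> ?T" "z \<in> ?T" and d: "x \<noteq> y \<and> y \<noteq> z \<and> x \<noteq> z"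
      obtain i where i: "(x,i) \<in> S" using m(1) by force
      obtain j where j: "(y,j) \<in> S" using m(2) by force
      obtain k where k: "(z,k) \<in> S" using m(3) by force
      have V: "x \<in> verts G" "y \<in> verts G" "z \<in> verts G" "i < n" "j < n" "k < n"
        using i j k SV by auto
      show "\<not> betw G x y z"
      proof
        assume b: "betw G x y z"
        have "betw ?P (x,i) (y,j) (z,k)"
          using b d unfolding betw_def sp_dist[OF G n V(1) V(3) V(4) V(6)] sp_dist[OF G n V(1) V(2) V(4) V(5)]
            sp_dist[OF G n V(2) V(3) V(5) V(6)] by simp
        moreover have "\<not> betw ?P (x,i) (y,j) (z,k)" using SP[OF i j k] d by auto
        ultimately show False by contradiction
      qed
    qed
    then have "card ?T \<le> gp G" by (rule gp_le[OF G(1)])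
    have ST: "S \<subseteq> ?T \<times> {0..<n}"
    proof
      fix p assume p: "p \<in> S"
      then have "fst p \<in> ?T" by (rule imageI)
      moreover have "snd p \<in> {0..<n}" using p SV by auto
      ultimately show "p \<in> ?T \<times> {0..<n}" by (simp add: mem_Times_iff)
    qed
    have fT: "finite ?T" using fin TV by (rule finite_subset[rotated])
    have "card S \<le> n * card ?T" by (rule card_fiber[OF ST fT])
    moreover note \<open>card ?T \<le> gp G\<close>
    ultimately show ?thesis using S(2) by (metis le_trans mult_le_mono2)
  qed
  have ge: "n * gp G \<le> gp ?P"
  proof -
    obtain S where S: "gp_set G S" "card S = gp G" using gp_ex[OF G(1)] by blast
    have SV: "S \<subseteq> verts G" using S(1) unfolding gp_set_def by blast
    have SG: "\<And>a b c. a \<in> S \<Longrightarrow> b \<in> S \<Longrightarrow> c \<in> S \<Longrightarrow> a \<noteq> b \<Longrightarrow> b \<noteq> c \<Longrightarrow> a \<noteq> c \<Longrightarrow> \<not> betw G a b c"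
      using S(1) unfolding gp_set_iff[OF G] by blast
    have "gp_set ?P (S \<times> {0..<n})" unfolding gp_set_iff[OF PS PC]
    proof (intro conjI ballI impI)
      show "S \<times> {0..<n} \<subseteq> verts ?P" using SV unfolding sp_verts by auto
      fix a b c assume m: "a \<in> S \<times> {0..<n}" "b \<in> S \<times> {0..<n}" "c \<in> S \<times> {0..<n}"
        and d: "a \<noteq> b \<and> b \<noteq> c \<and> a \<noteq> c"
      obtain x i where a: "a = (x,i)" "x \<in> S" "i < n" using m(1) by auto
      obtain y j where b: "b = (y,j)" "y \<in> S" "j < n" using m(2) by auto
      obtain z k where c: "c = (z,k)" "z \<in> S" "k < n" using m(3) by auto
      have V: "x \<in> verts G" "y \<in> verts G" "z \<in> verts G" using a b c SV by auto
      show "\<not> betw ?P a b c"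
      proof
        assume "betw ?P a b c"
        then have "x \<noteq> y \<and> y \<noteq> z \<and> x \<noteq> z \<and> betw G x y z"
          using prod_betw[OF G n V a(3) b(3) c(3)] a b c d by blast
        then show False using SG[OF a(2) b(2) c(2)] by blast
      qed
    qed
    then have "card (S \<times> {0..<n}) \<le> gp ?P" by (rule gp_le[OF PS])
    then show ?thesis using S(2) by (simp add: card_cartesian_product mult.commute)
  qed
  from le ge show ?thesis by simp
qed

lemma sr_verts: "verts (strong_resolving_graph G) = verts G"
  by (simp add: strong_resolving_graph_def verts_def)

lemma sr_adj: "adj (strong_resolving_graph G) u v \<longleftrightarrow> u \<in> verts G \<and> v \<in> verts G \<and> u \<noteq> v \<and> MMD G u v"
  by (simp add: strong_resolving_graph_def verts_def adj_def)

lemma sp_md: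
  assumes G: "simple_graph G" "connected_graph G" and n: "n \<ge> 1"
    and V: "x \<in> verts G" "y \<in> verts G" "i < n" "j < n" and xy: "x \<noteq> y"
  shows "maximally_distant (strong_product G (complete_graph n)) (x,i) (y,j) \<longleftrightarrow> maximally_distant G x y"
proof -
  let ?P = "strong_product G (complete_graph n)"
  have dxy: "dist ?P (x,i) (y,j) = dist G x y" using sp_dist[OF G n V] xy by simp
  show ?thesis
  proof
    assume M: "maximally_distant ?P (x,i) (y,j)"
    show "maximally_distant G x y" unfolding maximally_distant_def
    proof (intro allI impI)
      fix w assume a: "adj G x w"
      have wV: "w \<in> verts G" using adj_verts[OF G(1) a] by blast
      have "x \<noteq> w" using a adj_irrefl[OF G(1)] by blast
      then have "adj ?P (x,i) (w,i)" using a V wV unfolding sp_adj by auto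
      then have le: "dist ?P (y,j) (w,i) \<le> dist G x y" using M dxy unfolding maximally_distant_def by auto
      show "dist G y w \<le> dist G x y"
      proof (cases "w = y")
        case True then show ?thesis using dist_self[OF V(2)] by simp
      next
        case False
        then have "dist ?P (y,j) (w,i) = dist G y w" using sp_dist[OF G n V(2) wV V(4) V(3)] by simp
        then show ?thesis using le by simp
      qed
    qed
  next
    assume M: "maximally_distant G x y"
    show "maximally_distant ?P (x,i) (y,j)" unfolding maximally_distant_def
    proof (intro allI impI)
      fix w assume a: "adj ?P (x,i) w"
      obtain w1 w2 where w: "w = (w1,w2)" by (cases w)
      have wV: "w1 \<in> verts G" "w2 < n" and wa: "w1 = x \<or> adj G x w1" using a unfolding w sp_adj by auto
      have pos: "dist G x y \<noteq> 0" using dist_0[OF G(2) V(1) V(2)] xy by blast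
      show "dist ?P (y,j) w \<le> dist ?P (x,i) (y,j)"
      proof (cases "w1 = y")
        case True
        then have "dist ?P (y,j) w \<le> 1" using sp_dist[OF G n V(2) wV(1) V(4) wV(2)] w by simp
        then show ?thesis using dxy pos by simp
      next
        case False
        then have e: "dist ?P (y,j) w = dist G y w1" using sp_dist[OF G n V(2) wV(1) V(4) wV(2)] w by simp
        show ?thesis
        proof (cases "w1 = x")
          case True
          then show ?thesis using e dxy dist_sym[OF G V(2) V(1)] by simp
        next
          case False
          then have "adj G x w1" using wa by blast
          then have "dist G y w1 \<le> dist G x y" using M unfolding maximally_distant_def by blast
          then show ?thesis using e dxy by simp
        qed
      qed
    qed
  qed
qed

lemma sp_md_same:
  assumes G: "simple_graph G" "connected_graph G" and n: "n \<ge> 1"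
    and V: "x \<in> verts G" "i < n" "j < n" and ij: "i \<noteq> j"
  shows "maximally_distant (strong_product G (complete_graph n)) (x,i) (x,j)"
  unfolding maximally_distant_def
proof (intro allI impI)
  let ?P = "strong_product G (complete_graph n)"
  fix w assume a: "adj ?P (x,i) w"
  obtain w1 w2 where w: "w = (w1,w2)" by (cases w)
  have wV: "w1 \<in> verts G" "w2 < n" and wa: "w1 = x \<or> adj G x w1" using a unfolding w sp_adj by auto
  have d1: "dist ?P (x,i) (x,j) = 1" using sp_dist[OF G n V(1) V(1) V(2) V(3)] ij by simp
  show "dist ?P (x,j) w \<le> dist ?P (x,i) (x,j)"
  proof (cases "w1 = x")
    case True
    then show ?thesis using sp_dist[OF G n V(1) wV(1) V(3) wV(2)] w d1 by simp
  next
    case False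
    then have "adj G x w1" using wa by blast
    then have "dist G x w1 \<le> 1" by (rule dist_adj[OF G(1)])
    then show ?thesis using sp_dist[OF G n V(1) wV(1) V(3) wV(2)] w d1 False by simp
  qed
qed

lemma sp_mmd:
  assumes G: "simple_graph G" "connected_graph G" and n: "n \<ge> 1"
    and V: "x \<in> verts G" "y \<in> verts G" "i < n" "j < n" and d: "(x,i) \<noteq> (y,j)"
  shows "MMD (strong_product G (complete_graph n)) (x,i) (y,j) \<longleftrightarrow> (x = y \<or> MMD G x y)"
proof (cases "x = y")
  case True
  then have ij: "i \<noteq> j" using d by simp
  have "maximally_distant (strong_product G (complete_graph n)) (x,i) (x,j)"
    by (rule sp_md_same[OF G n V(1) V(3) V(4) ij])
  moreover have "maximally_distant (strong_product G (complete_graph n)) (x,j) (x,i)"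
    using sp_md_same[OF G n V(1) V(4) V(3)] ij by auto
  ultimately show ?thesis using True unfolding MMD_def by simp
next
  case False
  show ?thesis unfolding MMD_def
    using sp_md[OF G n V False] sp_md[OF G n V(2) V(1) V(4) V(3)] False by auto
qed

theorem cl_prod:
  assumes G: "simple_graph G" "connected_graph G" and n: "n \<ge> 1"
  shows "clique_number (strong_resolving_graph (strong_product G (complete_graph n)))
     = n * clique_number (strong_resolving_graph G)"
proof -
  let ?P = "strong_product G (complete_graph n)"
  let ?H = "strong_resolving_graph G"
  let ?HP = "strong_resolving_graph ?P"
  have fin: "finite (verts G)" using G(1) by (simp add: simple_graph_def)
  have finH: "finite (verts ?H)" using fin by (simp add: sr_verts)
  have finHP: "finite (verts ?HP)" using fin by (simp add: sr_verts sp_verts)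
  have le: "clique_number ?HP \<le> n * clique_number ?H"
  proof -
    obtain K where K: "clique ?HP K" "card K = clique_number ?HP" using cl_ex[OF finHP] by blast
    have KV: "K \<subseteq> verts G \<times> {0..<n}" using K(1) unfolding clique_def sr_verts sp_verts by blast
    let ?T = "fst ` K"
    have TV: "?T \<subseteq> verts G" using KV by auto
    have "clique ?H ?T" unfolding clique_def sr_verts
    proof (intro conjI TV ballI impI)
      fix x y assume m: "x \<in> ?T" "y \<in> ?T" and xy: "x \<noteq> y"
      obtain i where i: "(x,i) \<in> K" using m(1) by force
      obtain j where j: "(y,j) \<in> K" using m(2) by force
      have V: "x \<in> verts G" "y \<in> verts G" "i < n" "j < n" using i j KV by auto
      have dd: "(x,i) \<noteq> (y,j)" using xy by simp
      have "adj ?HP (x,i) (y,j)" using K(1) i j dd unfolding clique_def by blast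
      then have "MMD ?P (x,i) (y,j)" unfolding sr_adj by blast
      then have "MMD G x y" using sp_mmd[OF G n V dd] xy by simp
      then show "adj ?H x y" unfolding sr_adj using V xy by simp
    qed
    then have "card ?T \<le> clique_number ?H" by (rule cl_le[OF finH])
    have ST: "K \<subseteq> ?T \<times> {0..<n}"
    proof
      fix p assume p: "p \<in> K"
      then have "fst p \<in> ?T" by (rule imageI)
      moreover have "snd p \<in> {0..<n}" using p KV by auto
      ultimately show "p \<in> ?T \<times> {0..<n}" by (simp add: mem_Times_iff)
    qed
    have fT: "finite ?T" using fin TV by (rule finite_subset[rotated])
    have "card K \<le> n * card ?T" by (rule card_fiber[OF ST fT])
    moreover note \<open>card ?T \<le> clique_number ?H\<close>
    ultimately show ?thesis using K(2) by (metis le_trans mult_le_mono2)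
  qed
  have ge: "n * clique_number ?H \<le> clique_number ?HP"
  proof -
    obtain K where K: "clique ?H K" "card K = clique_number ?H" using cl_ex[OF finH] by blast
    have KV: "K \<subseteq> verts G" using K(1) unfolding clique_def sr_verts by blast
    have "clique ?HP (K \<times> {0..<n})" unfolding clique_def
    proof (intro conjI ballI impI)
      show "K \<times> {0..<n} \<subseteq> verts ?HP" using KV unfolding sr_verts sp_verts by auto
      fix a b assume m: "a \<in> K \<times> {0..<n}" "b \<in> K \<times> {0..<n}" and d: "a \<noteq> b"
      obtain x i where a: "a = (x,i)" "x \<in> K" "i < n" using m(1) by auto
      obtain y j where b: "b = (y,j)" "y \<in> K" "j < n" using m(2) by auto
      have V: "x \<in> verts G" "y \<in> verts G" using a b KV by auto
      have dd: "(x,i) \<noteq> (y,j)" using d a b by simp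
      have "x = y \<or> MMD G x y"
      proof (cases "x = y")
        case False
        then have "adj ?H x y" using K(1) a(2) b(2) unfolding clique_def by blast
        then show ?thesis unfolding sr_adj by blast
      qed simp
      then have "MMD ?P (x,i) (y,j)" using sp_mmd[OF G n V a(3) b(3) dd] by simp
      then show "adj ?HP a b" unfolding sr_adj sp_verts using a b V dd by simp
    qed
    then have "card (K \<times> {0..<n}) \<le> clique_number ?HP" by (rule cl_le[OF finHP])
    then show ?thesis using K(2) by (simp add: card_cartesian_product mult.commute)
  qed
  from le ge show ?thesis by simp
qed

theorem proposition4p3:
  fixes G :: "'a graph" and n :: nat
  assumes "simple_graph G" and "connected_graph G" and "n \<ge> 1"
  shows "gp (strong_product G (complete_graph n)) = n * gp G
    \<and> (gp G = clique_number (strong_resolving_graph G) \<longrightarrow>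
         gp (strong_product G (complete_graph n)) =
           clique_number (strong_resolving_graph (strong_product G (complete_graph n))))"
  using gp_prod[OF assms] cl_prod[OF assms] by simp

end
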